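(* There exists a topological dynamical system $(X,T)$, with $X$ containing at least two points, such that the whole space $X$ is a Banach scrambled set.
   Context: A topological dynamical system $(X,T)$ consists of a non-empty compact metric space $(X,d)$ and a continuous map $T:X\to X$. $\mathbb{Z}_+$ denotes the non-negative integers. A set $F\subset\mathbb{Z}_+$ has Banach density one if for every $\lambda<1$ there is $N\ge1$ such that $\#(F\cap I)\ge\lambda\,\#(I)$ for every interval $I\subset\mathbb{Z}_+$ of integers with $\#(I)\ge N$. A pair $(x,y)\in X^2$ is Banach proximal if for every $\varepsilon>0$ the set $\{n\in\mathbb{Z}_+: d(T^nx,T^ny)<\varepsilon\}$ has Banach density one. A pair is asymptotic if $\lim_{n\to\infty}d(T^nx,T^ny)=0$. A subset $S\subset X$ with at least two points is Banach scrambled if every pair of distinct points $x,y\in S$ is Banach proximal but not asymptotic. *)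

theory Defs
  imports "HOL-Analysis.Analysis"
begin

definition banach_density_one :: "nat set \<Rightarrow> bool" where
  "banach_density_one F \<longleftrightarrow>
     (\<forall>l::real. l < 1 \<longrightarrow> (\<exists>N\<ge>1. \<forall>a b::nat. a \<le> b \<longrightarrow> card {a..b} \<ge> N \<longrightarrow>
         real (card (F \<inter> {a..b})) \<ge> l * real (card {a..b})))"

definition tds :: "'a set \<Rightarrow> ('a \<Rightarrow> 'a \<Rightarrow> real) \<Rightarrow> ('a \<Rightarrow> 'a) \<Rightarrow> bool" where
  "tds X d T \<longleftrightarrow> X \<noteq> {} \<and> Metric_space X d \<and>
     compact_space (Metric_space.mtopology X d) \<and>
     continuous_map (Metric_space.mtopology X d) (Metric_space.mtopology X d) T"

definition banach_proximal :: "('a \<Rightarrow> 'a \<Rightarrow> real) \<Rightarrow> ('a \<Rightarrow> 'a) \<Rightarrow> 'a \<Rightarrow> 'a \<Rightarrow> bool" where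
  "banach_proximal d T x y \<longleftrightarrow>
     (\<forall>e>0. banach_density_one {n. d ((T ^^ n) x) ((T ^^ n) y) < e})"

definition asymptotic :: "('a \<Rightarrow> 'a \<Rightarrow> real) \<Rightarrow> ('a \<Rightarrow> 'a) \<Rightarrow> 'a \<Rightarrow> 'a \<Rightarrow> bool" where
  "asymptotic d T x y \<longleftrightarrow> ((\<lambda>n. d ((T ^^ n) x) ((T ^^ n) y)) \<longlonglongrightarrow> 0)"

definition banach_scrambled :: "('a \<Rightarrow> 'a \<Rightarrow> real) \<Rightarrow> ('a \<Rightarrow> 'a) \<Rightarrow> 'a set \<Rightarrow> bool" where
  "banach_scrambled d T S \<longleftrightarrow> (\<exists>x\<in>S. \<exists>y\<in>S. x \<noteq> y) \<and>
     (\<forall>x\<in>S. \<forall>y\<in>S. x \<noteq> y \<longrightarrow> banach_proximal d T x y \<and> \<not> asymptotic d T x y)"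

end

theory Submission
  imports Defs
begin


definition hh :: "nat \<Rightarrow> real" where
  "hh d = (if d = 0 then 1 else if d = 1 then 0 else 1/2)"

fun ff :: "nat \<Rightarrow> real" where
  "ff n = (if n = 0 then 1 else hh (n mod 3) * ff (n div 3))"

declare ff.simps[simp del]

lemma ff0[simp]: "ff 0 = 1" by (simp add: ff.simps)

lemma ff3: assumes "d < 3" shows "ff (3*N + d) = hh d * ff N"
proof (cases "3*N + d = 0")
  case True then have "N = 0" "d = 0" by auto
  then show ?thesis by (simp add: hh_def)
next
  case False
  have "(3*N+d) mod 3 = d" "(3*N+d) div 3 = N" using assms by auto
  then show ?thesis using False by (simp add: ff.simps[of "3*N+d"] hh_def)
qed

lemma ffM: "r < 3^p \<Longrightarrow> ff (3^p * w + r) = ff w * ff r"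
proof (induction p arbitrary: r)
  case 0 then show ?case by simp
next
  case (Suc p)
  have r: "r = 3 * (r div 3) + r mod 3" by simp
  have rd: "r div 3 < 3^p" using Suc.prems by auto
  have "3^Suc p * w + r = 3 * (3^p*w + r div 3) + r mod 3" by simp
  then have "ff (3^Suc p * w + r) = ff (3 * (3^p*w + r div 3) + r mod 3)" by metis
  also have "\<dots> = hh (r mod 3) * ff (3^p*w + r div 3)"
    by (rule ff3) simp
  also have "\<dots> = hh (r mod 3) * (ff w * ff (r div 3))" using Suc.IH[OF rd] by simp
  also have "\<dots> = ff w * ff r"
  proof -
    have e: "ff r = hh (r mod 3) * ff (r div 3)" using ff3[of "r mod 3" "r div 3"] by simp
    show ?thesis by (simp add: e mult_ac)
  qed
  finally show ?case .
qed

lemma ff_nonneg: "ff n \<ge> 0"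
proof (induction n rule: ff.induct)
  case (1 n)
  then show ?case by (cases "n = 0") (auto simp: ff.simps[of n] hh_def)
qed

lemma ff_le1: "ff n \<le> 1"
proof (induction n rule: ff.induct)
  case (1 n)
  show ?case
  proof (cases "n = 0")
    case False
    have "hh (n mod 3) \<le> 1" "hh (n mod 3) \<ge> 0" by (auto simp: hh_def)
    then show ?thesis using 1 False ff_nonneg[of "n div 3"]
      by (simp add: ff.simps[of n] mult_le_one)
  qed simp
qed

lemma ff_pos_le_half: "n > 0 \<Longrightarrow> ff n \<le> 1/2"
proof (induction n rule: ff.induct)
  case (1 n)
  show ?case
  proof (cases "n mod 3 = 0")
    case True
    then have "n div 3 > 0" using 1(2) by auto
    then show ?thesis using 1 True by (simp add: ff.simps[of n] hh_def)
  next
    case False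
    then have "hh (n mod 3) \<le> 1/2" "hh (n mod 3) \<ge> 0" by (auto simp: hh_def)
    moreover have "hh (n mod 3) * ff (n div 3) \<le> hh (n mod 3)"
      using mult_left_le[of "ff (n div 3)" "hh (n mod 3)"] ff_le1[of "n div 3"] \<open>hh (n mod 3) \<ge> 0\<close> by simp
    ultimately show ?thesis using 1(2) by (simp add: ff.simps[of n])
  qed
qed

lemma ff_pow: "ff n = 0 \<or> (\<exists>k. ff n = (1/2)^k)"
proof (induction n rule: ff.induct)
  case (1 n)
  show ?case
  proof (cases "n = 0")
    case True then show ?thesis by (metis ff0 power_0)
  next
    case False
    have fn: "ff n = hh (n mod 3) * ff (n div 3)" using False by (simp add: ff.simps[of n])
    have "n mod 3 < 3" by simp
    then consider "n mod 3 = 0" | "n mod 3 = 1" | "n mod 3 = 2" by linarith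
    then show ?thesis
    proof cases
      case 1 then show ?thesis using fn "1.IH" False by (simp add: hh_def)
    next
      case 2 then show ?thesis using fn by (simp add: hh_def)
    next
      case 3
      show ?thesis
      proof (cases "ff (n div 3) = 0")
        case True then show ?thesis using fn by simp
      next
        case False
        then obtain k where "ff (n div 3) = (1/2)^k" using "1.IH" \<open>n \<noteq> 0\<close> by blast
        then have "ff n = (1/2)^Suc k" using fn 3 by (simp add: hh_def)
        then show ?thesis by blast
      qed
    qed
  qed
qed

lemma ff_1[simp]: "ff 1 = 0"
proof -
  have "ff (3*0+1) = hh 1 * ff 0" by (rule ff3) simp
  then show ?thesis by (simp add: hh_def)
qed
lemma ff_2[simp]: "ff 2 = 1/2" by (simp add: ff.simps[of 2] hh_def)

lemma ff_2pow: "ff (2*3^t) = 1/2"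
  using ffM[of 0 t 2] by (simp add: mult.commute)

lemma ff_decomp: "ff n \<noteq> 0 \<Longrightarrow> n > 0 \<Longrightarrow> \<exists>b w. n = 3^b * (3*w+2)"
proof (induction n rule: less_induct)
  case (less n)
  have n: "n = 3 * (n div 3) + n mod 3" by simp
  have "n mod 3 < 3" by simp
  then consider "n mod 3 = 0" | "n mod 3 = 1" | "n mod 3 = 2" by linarith
  then show ?case
  proof cases
    case 1
    then have "ff n = ff (n div 3)" using ff3[of 0 "n div 3"] n by (simp add: hh_def)
    moreover have "n div 3 < n" "n div 3 > 0" using less.prems 1 by auto
    moreover have "ff (n div 3) \<noteq> 0" using less.prems(1) \<open>ff n = ff (n div 3)\<close> by simp
    ultimately obtain b w where "n div 3 = 3^b*(3*w+2)" using less.IH[of "n div 3"] by blast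
    then have "n = 3^Suc b * (3*w+2)" using n 1 by simp
    then show ?thesis by blast
  next
    case 2
    then have "ff n = 0" using ff3[of 1 "n div 3"] n by (simp add: hh_def)
    then show ?thesis using less.prems by simp
  next
    case 3
    then have "n = 3^0 * (3*(n div 3)+2)" using n by simp
    then show ?thesis by blast
  qed
qed



definition FF :: "int \<Rightarrow> real" where
  "FF z = (if z < 0 then 0 else ff (nat z))"

lemma FF_nonneg: "FF z \<ge> 0" by (simp add: FF_def ff_nonneg)
lemma FF_le1: "FF z \<le> 1" by (simp add: FF_def ff_le1)
lemma FF0[simp]: "FF 0 = 1" by (simp add: FF_def)
lemma FF_neg: "z < 0 \<Longrightarrow> FF z = 0" by (simp add: FF_def)

lemma FF_pow: "FF z = 0 \<or> (\<exists>k. FF z = (1/2)^k)"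
  using ff_pow[of "nat z"] by (auto simp: FF_def)

lemma FF_ge1: "FF z \<ge> 1 \<Longrightarrow> z = 0"
proof -
  assume a: "FF z \<ge> 1"
  then have "z \<ge> 0" by (auto simp: FF_def split: if_splits)
  moreover have "\<not> z > 0"
  proof
    assume "z > 0"
    then have "ff (nat z) \<le> 1/2" using ff_pos_le_half[of "nat z"] by simp
    then show False using a \<open>z > 0\<close> by (simp add: FF_def)
  qed
  ultimately show ?thesis by linarith
qed

lemma FF_int[simp]: "FF (int n) = ff n" by (simp add: FF_def)

lemma FM: assumes "0 \<le> r" "r < 3^p" shows "FF (3^p * W + r) = FF W * FF r"
proof (cases "W < 0")
  case True
  have "W \<le> -1" using True by simp
  then have "3^p * W \<le> 3^p * (-1)" by (rule mult_left_mono) simp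
  then have "3^p * W + r < 0" using assms by linarith
  then show ?thesis using True by (simp add: FF_neg)
next
  case False
  define w where "w = nat W"
  define r' where "r' = nat r"
  have w: "W = int w" unfolding w_def using False by simp
  have r': "r = int r'" unfolding r'_def using assms(1) by simp
  have "int r' < int (3^p)" using assms(2) unfolding r' by simp
  then have lt: "r' < 3^p" by (simp only: of_nat_less_iff)
  have e: "3^p * W + r = int (3^p * w + r')" unfolding w r' by simp
  have "FF (3^p * W + r) = FF (int (3^p * w + r'))" using e by (rule arg_cong)
  also have "\<dots> = ff (3^p * w + r')" by (rule FF_int)
  also have "\<dots> = ff w * ff r'" by (rule ffM[OF lt])
  also have "\<dots> = FF W * FF r" unfolding w r' by simp
  finally show ?thesis .
qed

lemma ff_Suc0[simp]: "ff (Suc 0) = 0" using ff_1 by simp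

lemma FF_3W1: "FF (3*W + 1) = 0"
  using FM[of 1 1 W] by (simp add: FF_def)

lemma FF_1: "FF 1 = 0" by (simp add: FF_def)
lemma FF_2pow: "FF (2*3^t) = 1/2"
  using FM[of 0 t 2] by (simp add: FF_def mult.commute)

lemma FF_decomp: "FF n \<noteq> 0 \<Longrightarrow> n > 0 \<Longrightarrow> \<exists>b W. W \<ge> 0 \<and> n = 3^b * (3*W+2)"
proof -
  assume a: "FF n \<noteq> 0" "n > 0"
  then have "ff (nat n) \<noteq> 0" "nat n > 0" by (auto simp: FF_def)
  then obtain b w where "nat n = 3^b * (3*w+2)" using ff_decomp by blast
  then have "int (nat n) = int (3^b * (3*w+2))" by simp
  then have "n = 3^b * (3 * int w + 2)" using a by (simp add: algebra_simps)
  then show ?thesis by (intro exI[of _ b] exI[of _ "int w"]) simp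
qed

lemma g_far:
  assumes "W \<ge> 0" "\<bar>d\<bar> < 3^b" "n = 3^b * (3*W+2)"
  shows "FF (n + d) = FF n * FF d"
proof (cases "d \<ge> 0")
  case True
  then show ?thesis using FM[of d b "3*W+2"] FM[of 0 b "3*W+2"] assms by simp
next
  case False
  have "n + d = 3^b * (3*W+1) + (3^b + d)" using assms by (simp add: algebra_simps)
  then have "FF (n+d) = FF (3^b * (3*W+1) + (3^b + d))" by (simp only:)
  also have "\<dots> = FF (3*W+1) * FF (3^b+d)" using FM[of "3^b+d" b "3*W+1"] assms False by simp
  finally have "FF (n+d) = FF (3*W+1) * FF (3^b+d)" .
  then show ?thesis using FF_3W1 False by (simp add: FF_neg)
qed

lemma g_low:
  assumes "n = 3^(Suc b) * W + 2*3^b"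
  shows "FF n = FF W / 2"
    "FF (n+d) = FF (W + (2*3^b+d) div 3^(Suc b)) * FF ((2*3^b+d) mod 3^(Suc b))"
proof -
  have "0 \<le> (2::int)*3^b" "(2::int)*3^b < 3^Suc b" by auto
  then have "FF n = FF W * FF (2*3^b)" using FM[of "2*3^b" "Suc b" W] assms by simp
  then show "FF n = FF W / 2" using FF_2pow by simp
  define e where "e = (2*3^b+d) div (3::int)^(Suc b)"
  define \<rho> where "\<rho> = (2*3^b+d) mod (3::int)^(Suc b)"
  have "2*3^b + d = 3^Suc b * e + \<rho>" unfolding e_def \<rho>_def by simp
  then have eqn: "n + d = 3^Suc b * (W + e) + \<rho>" using assms by (simp add: algebra_simps)
  have r: "0 \<le> \<rho>" "\<rho> < 3^Suc b" unfolding \<rho>_def by auto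
  from eqn have "FF (n+d) = FF (3^Suc b * (W + e) + \<rho>)" by (rule arg_cong)
  also have "\<dots> = FF (W + e) * FF \<rho>" using FM[OF r] by blast
  finally show "FF (n+d) = FF (W + (2*3^b+d) div 3^(Suc b)) * FF ((2*3^b+d) mod 3^(Suc b))"
    by (simp only: e_def \<rho>_def)
qed



lemma ev_subseq: "strict_mono r \<Longrightarrow> eventually P sequentially \<Longrightarrow> eventually (\<lambda>j. P (r j)) sequentially"
  by (metis eventually_sequentially le_trans seq_suble)

lemma subseq_const:
  fixes t :: "nat \<Rightarrow> nat"
  assumes "\<forall>j. t j \<le> B"
  shows "\<exists>(r::nat\<Rightarrow>nat) c. strict_mono r \<and> (\<forall>j. t (r j) = c)"
proof -
  have "finite (t ` UNIV)" using assms by (meson finite_atMost finite_subset image_subsetI atMost_iff)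
  then obtain a0 where "infinite {a \<in> UNIV. t a = t a0}"
    using pigeonhole_infinite[of UNIV t] by auto
  then have inf: "infinite {a. t a = t a0}" by simp
  define r where "r = enumerate {a. t a = t a0}"
  have "strict_mono r" unfolding r_def using strict_mono_enumerate[OF inf] .
  moreover have "\<forall>j. t (r j) = t a0" unfolding r_def using enumerate_in_set[OF inf] by blast
  ultimately show ?thesis by (intro exI[of _ r] exI[of _ "t a0"]) simp
qed

lemma subseq_nat:
  fixes s :: "nat \<Rightarrow> nat"
  shows "\<exists>r::nat\<Rightarrow>nat. strict_mono r \<and> ((\<exists>c. \<forall>j. s (r j) = c) \<or> (\<forall>B. eventually (\<lambda>j. B \<le> s (r j)) sequentially))"
proof -
  obtain f where f: "strict_mono f" "monoseq (\<lambda>n. s (f n))" using seq_monosub by blast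
  show ?thesis
  proof (cases "\<exists>B. \<forall>j. s (f j) \<le> B")
    case True
    then obtain B where "\<forall>j. s (f j) \<le> B" by blast
    then obtain r :: "nat \<Rightarrow> nat" and c where "strict_mono r" "\<forall>j. s (f (r j)) = c" using subseq_const[of "\<lambda>j. s (f j)" B] by blast
    moreover have "strict_mono (\<lambda>j. f (r j))" using f(1) \<open>strict_mono r\<close> by (simp add: strict_mono_def)
    ultimately show ?thesis by (intro exI[of _ "\<lambda>j. f (r j)"]) blast
  next
    case False
    have inc: "\<forall>m n. m \<le> n \<longrightarrow> s (f m) \<le> s (f n)"
    proof (rule ccontr)
      assume "\<not> ?thesis"
      then have "\<forall>m n. m \<le> n \<longrightarrow> s (f n) \<le> s (f m)" using f(2) unfolding monoseq_def by blast
      then have "\<forall>j. s (f j) \<le> s (f 0)" by blast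
      then show False using False by blast
    qed
    have "\<forall>B. eventually (\<lambda>j. B \<le> s (f j)) sequentially"
    proof
      fix B
      obtain j0 where "s (f j0) > B" using False by (meson not_le)
      then show "eventually (\<lambda>j. B \<le> s (f j)) sequentially"
        unfolding eventually_sequentially using inc by (meson le_trans less_imp_le)
    qed
    then show ?thesis using f(1) by blast
  qed
qed

lemma S_lemma:
  "\<forall>\<sigma>::nat\<Rightarrow>int. eventually (\<lambda>j. FF (\<sigma> j) \<ge> (1/2)^q) sequentially \<longrightarrow>
    (\<exists>r L. strict_mono r \<and> FF L > 0 \<and> eventually (\<lambda>j. FF (\<sigma> (r j)) \<le> FF L) sequentially \<and>
      (\<forall>d. eventually (\<lambda>j. FF (\<sigma> (r j) + d) / FF (\<sigma> (r j)) = FF (L + d) / FF L) sequentially))"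
proof (induction q)
  case 0
  show ?case
  proof (intro allI impI)
    fix \<sigma> :: "nat \<Rightarrow> int"
    assume "eventually (\<lambda>j. FF (\<sigma> j) \<ge> (1/2)^0) sequentially"
    then have ev: "eventually (\<lambda>j. \<sigma> j = 0) sequentially"
      by (rule eventually_mono) (simp add: FF_ge1)
    have "strict_mono (\<lambda>j::nat. j)" by (simp add: strict_mono_def)
    moreover have "eventually (\<lambda>j. FF (\<sigma> j) \<le> FF 0) sequentially"
      using ev by (rule eventually_mono) simp
    moreover have "\<forall>d. eventually (\<lambda>j. FF (\<sigma> j + d) / FF (\<sigma> j) = FF (0 + d) / FF 0) sequentially"
      using ev by (auto elim: eventually_mono)
    ultimately show "\<exists>r L. strict_mono r \<and> FF L > 0 \<and> eventually (\<lambda>j. FF (\<sigma> (r j)) \<le> FF L) sequentially \<and>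
      (\<forall>d. eventually (\<lambda>j. FF (\<sigma> (r j) + d) / FF (\<sigma> (r j)) = FF (L + d) / FF L) sequentially)"
      by (intro exI[of _ "\<lambda>j. j"] exI[of _ 0]) simp
  qed
next
  case (Suc q)
  show ?case
  proof (intro allI impI)
    fix \<sigma> :: "nat \<Rightarrow> int"
    assume H: "eventually (\<lambda>j. FF (\<sigma> j) \<ge> (1/2)^Suc q) sequentially"
    obtain r1 where r1: "strict_mono r1"
      "(\<exists>c. \<forall>j. nat (\<sigma> (r1 j)) = c) \<or> (\<forall>B. eventually (\<lambda>j. B \<le> nat (\<sigma> (r1 j))) sequentially)"
      using subseq_nat[of "\<lambda>j. nat (\<sigma> j)"] by blast
    define \<sigma>1 where "\<sigma>1 = (\<lambda>j. \<sigma> (r1 j))"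
    have H1: "eventually (\<lambda>j. FF (\<sigma>1 j) \<ge> (1/2)^Suc q) sequentially"
      unfolding \<sigma>1_def using ev_subseq[OF r1(1) H] .
    have pos1: "eventually (\<lambda>j. FF (\<sigma>1 j) > 0) sequentially"
      using H1 by (rule eventually_mono) (metis less_le_trans zero_less_divide_1_iff zero_less_numeral zero_less_power)
    have nn1: "eventually (\<lambda>j. \<sigma>1 j \<ge> 0) sequentially"
      using pos1 by (rule eventually_mono) (metis FF_neg less_irrefl not_le)
    show "\<exists>r L. strict_mono r \<and> FF L > 0 \<and> eventually (\<lambda>j. FF (\<sigma> (r j)) \<le> FF L) sequentially \<and>
      (\<forall>d. eventually (\<lambda>j. FF (\<sigma> (r j) + d) / FF (\<sigma> (r j)) = FF (L + d) / FF L) sequentially)"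
    proof (cases "\<exists>c. \<forall>j. nat (\<sigma> (r1 j)) = c")
      case True
      then obtain c where c: "\<forall>j. nat (\<sigma>1 j) = c" unfolding \<sigma>1_def by blast
      have evc: "eventually (\<lambda>j. \<sigma>1 j = int c) sequentially"
        using nn1 by (rule eventually_mono) (metis c int_nat_eq)
      have "eventually (\<lambda>j. \<sigma>1 j = int c \<and> FF (\<sigma>1 j) > 0) sequentially"
        using evc pos1 by (rule eventually_conj)
      then obtain j where "\<sigma>1 j = int c \<and> FF (\<sigma>1 j) > 0" using eventually_happens by fastforce
      then have "FF (int c) > 0" by metis
      moreover have "eventually (\<lambda>j. FF (\<sigma>1 j) \<le> FF (int c)) sequentially"
        using evc by (rule eventually_mono) simp
      moreover have "\<forall>d. eventually (\<lambda>j. FF (\<sigma>1 j + d) / FF (\<sigma>1 j) = FF (int c + d) / FF (int c)) sequentially"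
        using evc by (auto elim: eventually_mono)
      ultimately show ?thesis using r1(1) unfolding \<sigma>1_def by blast
    next
      case False
      then have "\<forall>B. eventually (\<lambda>j. B \<le> nat (\<sigma>1 j)) sequentially" using r1(2) unfolding \<sigma>1_def by blast
      then have gt1: "eventually (\<lambda>j. \<sigma>1 j > 0) sequentially"
        by (metis (mono_tags, lifting) eventually_mono nat_le_0 not_le not_one_le_zero)
      have "\<forall>j. \<exists>p. (FF (\<sigma>1 j) \<noteq> 0 \<and> \<sigma>1 j > 0) \<longrightarrow> snd p \<ge> 0 \<and> \<sigma>1 j = 3^(fst p) * (3 * snd p + 2)"
        using FF_decomp by fastforce
      then obtain p where p: "\<forall>j. (FF (\<sigma>1 j) \<noteq> 0 \<and> \<sigma>1 j > 0) \<longrightarrow> snd (p j) \<ge> 0 \<and> \<sigma>1 j = 3^(fst (p j)) * (3 * snd (p j) + 2)"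
        by metis
      define bb where "bb j = fst (p j)" for j
      define WW where "WW j = snd (p j)" for j
      have dec: "eventually (\<lambda>j. WW j \<ge> 0 \<and> \<sigma>1 j = 3^(bb j) * (3 * WW j + 2)) sequentially"
        using eventually_conj[OF pos1 gt1] by (rule eventually_mono) (use p bb_def WW_def in force)
      obtain r2 where r2: "strict_mono r2"
        "(\<exists>c. \<forall>j. bb (r2 j) = c) \<or> (\<forall>B. eventually (\<lambda>j. B \<le> bb (r2 j)) sequentially)"
        using subseq_nat[of bb] by blast
      define \<sigma>2 where "\<sigma>2 = (\<lambda>j. \<sigma>1 (r2 j))"
      have dec2: "eventually (\<lambda>j. WW (r2 j) \<ge> 0 \<and> \<sigma>2 j = 3^(bb (r2 j)) * (3 * WW (r2 j) + 2)) sequentially"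
        unfolding \<sigma>2_def using ev_subseq[OF r2(1) dec] .
      have H2: "eventually (\<lambda>j. FF (\<sigma>2 j) \<ge> (1/2)^Suc q) sequentially"
        unfolding \<sigma>2_def using ev_subseq[OF r2(1) H1] .
      have pos2: "eventually (\<lambda>j. FF (\<sigma>2 j) > 0) sequentially"
        unfolding \<sigma>2_def using ev_subseq[OF r2(1) pos1] .
      show ?thesis
      proof (cases "\<exists>c. \<forall>j. bb (r2 j) = c")
        case True
        then obtain b0 where b0: "\<forall>j. bb (r2 j) = b0" by blast
        define W2 where "W2 j = WW (r2 j)" for j
        have eq2: "eventually (\<lambda>j. \<sigma>2 j = 3^(Suc b0) * W2 j + 2*3^b0) sequentially"
          using dec2 by (rule eventually_mono) (simp add: b0 W2_def algebra_simps)
        have HW: "eventually (\<lambda>j. FF (W2 j) \<ge> (1/2)^q) sequentially"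
          using eventually_conj[OF eq2 H2]
        proof (rule eventually_mono)
          fix j assume a: "\<sigma>2 j = 3^(Suc b0) * W2 j + 2*3^b0 \<and> (1/2)^Suc q \<le> FF (\<sigma>2 j)"
          then have e: "FF (\<sigma>2 j) = FF (W2 j) / 2" using g_low(1) by blast
          from a have "(1/2)^Suc q \<le> FF (\<sigma>2 j)" by blast
          with e show "FF (W2 j) \<ge> (1/2)^q" by simp
        qed
        obtain r3 L' where r3: "strict_mono r3" "FF L' > 0"
          "eventually (\<lambda>j. FF (W2 (r3 j)) \<le> FF L') sequentially"
          "\<forall>d. eventually (\<lambda>j. FF (W2 (r3 j) + d) / FF (W2 (r3 j)) = FF (L' + d) / FF L') sequentially"
          using Suc.IH HW by blast
        define L where "L = 3^(Suc b0) * L' + 2*3^b0"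
        have FL: "FF L = FF L' / 2" using g_low(1)[OF L_def] .
        define r where "r = (\<lambda>j. r1 (r2 (r3 j)))"
        have smr: "strict_mono r" unfolding r_def using r1(1) r2(1) r3(1) by (simp add: strict_mono_def)
        have sr: "\<sigma> (r j) = \<sigma>2 (r3 j)" for j unfolding r_def \<sigma>2_def \<sigma>1_def by simp
        have eq3: "eventually (\<lambda>j. \<sigma>2 (r3 j) = 3^(Suc b0) * W2 (r3 j) + 2*3^b0) sequentially"
          using ev_subseq[OF r3(1) eq2] .
        have HW3: "eventually (\<lambda>j. FF (W2 (r3 j)) \<ge> (1/2)^q) sequentially"
          using ev_subseq[OF r3(1) HW] .
        have A1: "eventually (\<lambda>j. FF (\<sigma> (r j)) \<le> FF L) sequentially"
          using eventually_conj[OF eq3 r3(3)]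
          by (rule eventually_mono) (simp add: sr FL g_low(1))
        have A2: "\<forall>d. eventually (\<lambda>j. FF (\<sigma> (r j) + d) / FF (\<sigma> (r j)) = FF (L + d) / FF L) sequentially"
        proof
          fix d
          define e where "e = (2*3^b0+d) div (3::int)^(Suc b0)"
          define \<rho> where "\<rho> = (2*3^b0+d) mod (3::int)^(Suc b0)"
          have L1: "FF (L + d) = FF (L' + e) * FF \<rho>" unfolding e_def \<rho>_def using g_low(2)[OF L_def] .
          show "eventually (\<lambda>j. FF (\<sigma> (r j) + d) / FF (\<sigma> (r j)) = FF (L + d) / FF L) sequentially"
            using eventually_conj[OF eventually_conj[OF eq3 HW3] r3(4)[rule_format, of e]]
          proof (rule eventually_mono)
            fix j
            assume a: "(\<sigma>2 (r3 j) = 3^(Suc b0) * W2 (r3 j) + 2*3^b0 \<and> (1/2)^q \<le> FF (W2 (r3 j))) \<and>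
               FF (W2 (r3 j) + e) / FF (W2 (r3 j)) = FF (L' + e) / FF L'"
            have s1: "FF (\<sigma>2 (r3 j)) = FF (W2 (r3 j)) / 2" using a g_low(1) by blast
            have s2: "FF (\<sigma>2 (r3 j) + d) = FF (W2 (r3 j) + e) * FF \<rho>"
              unfolding e_def \<rho>_def using a g_low(2) by blast
            have nz: "FF (W2 (r3 j)) \<noteq> 0" using a
              by (metis divide_pos_pos less_le_trans not_less_iff_gr_or_eq zero_less_numeral zero_less_one zero_less_power)
            have nz': "FF L' \<noteq> 0" using r3(2) by simp
            have "FF (\<sigma>2 (r3 j) + d) / FF (\<sigma>2 (r3 j)) = 2 * FF \<rho> * (FF (W2 (r3 j) + e) / FF (W2 (r3 j)))"
              using s1 s2 nz by (simp add: field_simps)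
            also have "\<dots> = 2 * FF \<rho> * (FF (L' + e) / FF L')" using a by simp
            also have "\<dots> = FF (L + d) / FF L" using L1 FL nz' by (simp add: field_simps)
            finally show "FF (\<sigma> (r j) + d) / FF (\<sigma> (r j)) = FF (L + d) / FF L" by (simp add: sr)
          qed
        qed
        have "FF L > 0" using FL r3(2) by simp
        then show ?thesis using smr A1 A2 by blast
      next
        case False
        then have binf: "\<forall>B. eventually (\<lambda>j. B \<le> bb (r2 j)) sequentially" using r2(2) by blast
        define r where "r = (\<lambda>j. r1 (r2 j))"
        have smr: "strict_mono r" unfolding r_def using r1(1) r2(1) by (simp add: strict_mono_def)
        have sr: "\<sigma> (r j) = \<sigma>2 j" for j unfolding r_def \<sigma>2_def \<sigma>1_def by simp
        have A1: "eventually (\<lambda>j. FF (\<sigma> (r j)) \<le> FF 0) sequentially"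
          by (simp add: FF_le1)
        have A2: "\<forall>d. eventually (\<lambda>j. FF (\<sigma> (r j) + d) / FF (\<sigma> (r j)) = FF (0 + d) / FF 0) sequentially"
        proof
          fix d :: int
          show "eventually (\<lambda>j. FF (\<sigma> (r j) + d) / FF (\<sigma> (r j)) = FF (0 + d) / FF 0) sequentially"
            using eventually_conj[OF eventually_conj[OF dec2 pos2] binf[rule_format, of "nat \<bar>d\<bar>"]]
          proof (rule eventually_mono)
            fix j
            assume a: "((WW (r2 j) \<ge> 0 \<and> \<sigma>2 j = 3^(bb (r2 j)) * (3 * WW (r2 j) + 2)) \<and> FF (\<sigma>2 j) > 0)
              \<and> nat \<bar>d\<bar> \<le> bb (r2 j)"
            have "\<bar>d\<bar> < 3^(bb (r2 j))"
            proof -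
              have "nat \<bar>d\<bar> < 3^(nat \<bar>d\<bar>)"
                using less_exp[of "nat \<bar>d\<bar>"] power_mono[of "2::nat" 3 "nat \<bar>d\<bar>"] by linarith
              also have "\<dots> \<le> 3^(bb (r2 j))" using a by (simp add: power_increasing)
              finally have "int (nat \<bar>d\<bar>) < int (3^(bb (r2 j)))" by (simp only: of_nat_less_iff)
              then show ?thesis by simp
            qed
            then have eq: "FF (\<sigma>2 j + d) = FF (\<sigma>2 j) * FF d" using a g_far by blast
            have nz: "FF (\<sigma>2 j) \<noteq> 0" using a by auto
            show "FF (\<sigma> (r j) + d) / FF (\<sigma> (r j)) = FF (0 + d) / FF 0" unfolding sr using eq nz by simp
          qed
        qed
        show ?thesis using smr A1 A2 by (intro exI[of _ r] exI[of _ 0]) simp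
      qed
    qed
  qed
qed



definition Pt :: "nat \<times> int \<Rightarrow> nat \<Rightarrow> real" where
  "Pt p = (\<lambda>i. (1/2)^(fst p) * FF (snd p + int i))"
definition code :: "nat \<times> int \<Rightarrow> real" where
  "code p = real (to_nat p) + 1"
definition dec :: "real \<Rightarrow> nat \<times> int" where
  "dec x = from_nat (nat \<lfloor>x\<rfloor> - 1)"
definition XX :: "real set" where
  "XX = insert 0 (range code)"
definition EE :: "real \<Rightarrow> nat \<Rightarrow> real" where
  "EE x = (if x = 0 then (\<lambda>i. 0) else Pt (dec x))"
definition TT :: "real \<Rightarrow> real" where
  "TT x = (if x = 0 then 0 else code (fst (dec x), snd (dec x) + 1))"
definition dd :: "real \<Rightarrow> real \<Rightarrow> real" where
  "dd x y = dist (EE x) (EE y)"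

lemma dec_code[simp]: "dec (code p) = p"
proof -
  have "\<lfloor>code p\<rfloor> = int (to_nat p) + 1" unfolding code_def by simp
  then have "nat \<lfloor>code p\<rfloor> - 1 = to_nat p" by simp
  then show ?thesis unfolding dec_def by simp
qed

lemma code_ne0[simp]: "code p \<noteq> 0"
proof -
  have "real (to_nat p) \<ge> 0" by simp
  then show ?thesis unfolding code_def by linarith
qed

lemma EE_code[simp]: "EE (code p) = Pt p" by (simp add: EE_def)
lemma EE_0[simp]: "EE 0 = (\<lambda>i. 0)" by (simp add: EE_def)
lemma TT_0[simp]: "TT 0 = 0" by (simp add: TT_def)
lemma TT_code[simp]: "TT (code (k,m)) = code (k, m+1)" by (simp add: TT_def)

lemma XX_cases: "x \<in> XX \<Longrightarrow> x = 0 \<or> (\<exists>k m. x = code (k,m))"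
  unfolding XX_def by auto

lemma TT_XX: "x \<in> XX \<Longrightarrow> TT x \<in> XX"
  using XX_cases[of x] by (auto simp: XX_def)

lemma EE_TT: "x \<in> XX \<Longrightarrow> EE (TT x) = (\<lambda>i. EE x (Suc i))"
  using XX_cases[of x] by (auto simp: Pt_def algebra_simps)

lemma iter_XX: "x \<in> XX \<Longrightarrow> (TT ^^ n) x \<in> XX \<and> EE ((TT ^^ n) x) = (\<lambda>i. EE x (n + i))"
proof (induction n)
  case 0 then show ?case by simp
next
  case (Suc n)
  then show ?case using TT_XX EE_TT by simp
qed

lemma EE_range: "0 \<le> EE x i \<and> EE x i \<le> 1"
proof (cases "x = 0")
  case False
  have "(1/2::real)^(fst (dec x)) \<le> 1" by (simp add: power_le_one)
  then have "(1/2::real)^(fst (dec x)) * FF (snd (dec x) + int i) \<le> 1"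
    using FF_le1 FF_nonneg by (simp add: mult_le_one)
  then show ?thesis using False FF_nonneg by (simp add: EE_def Pt_def)
qed simp

lemma Pt_peak: "int n = 2*3^t - m \<Longrightarrow> Pt (k,m) n = (1/2)^(Suc k)"
proof -
  assume "int n = 2*3^t - m"
  then have "m + int n = 2*3^t" by simp
  then show ?thesis by (simp add: Pt_def FF_2pow)
qed

lemma Pt_zero: "int n = 2*3^t - m' \<Longrightarrow> m < m' \<Longrightarrow> m' - m \<le> 3^t \<Longrightarrow> Pt (k,m) n = 0"
proof -
  assume a: "int n = 2*3^t - m'" "m < m'" "m' - m \<le> 3^t"
  then have e: "m + int n = 3^t * 1 + (3^t - (m' - m))" by simp
  have "0 \<le> 3^t - (m' - m)" "3^t - (m' - m) < 3^t" using a by auto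
  then have f: "FF (3^t * 1 + (3^t - (m' - m))) = FF 1 * FF (3^t - (m' - m))" by (rule FM)
  have "FF (m + int n) = FF (3^t * 1 + (3^t - (m' - m)))" using e by (rule arg_cong)
  then have "FF (m + int n) = 0" using f FF_1 by simp
  then show ?thesis by (simp add: Pt_def)
qed

lemma exists_t: "\<exists>t n. int n = 2*3^t - m' \<and> N \<le> n \<and> \<bar>m\<bar> + \<bar>m'\<bar> \<le> 3^t"
proof -
  define t where "t = N + nat \<bar>m\<bar> + nat \<bar>m'\<bar>"
  have "t < 3^t" using less_exp[of t] power_mono[of "2::nat" 3 t] by linarith
  then have "int t < 3^t" by (metis of_nat_less_iff of_nat_numeral of_nat_power)
  then have h: "int N + \<bar>m\<bar> + \<bar>m'\<bar> < 3^t" unfolding t_def by simp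
  define n where "n = nat (2*3^t - m')"
  have "2*3^t - m' \<ge> 0" using h by linarith
  then have "int n = 2*3^t - m'" unfolding n_def by simp
  moreover have "N \<le> n" using h \<open>int n = 2*3^t - m'\<close> by linarith
  moreover have "\<bar>m\<bar> + \<bar>m'\<bar> \<le> 3^t" using h by linarith
  ultimately show ?thesis by blast
qed

lemma sep_0: "\<exists>c>0. \<forall>N. \<exists>n\<ge>N. \<bar>Pt (k,m) n - 0\<bar> \<ge> c"
proof (intro exI[of _ "(1/2)^Suc k"] conjI allI)
  fix N
  obtain t n where "int n = 2*3^t - m" "N \<le> n" using exists_t[of m N m] by blast
  then have "Pt (k,m) n = (1/2)^Suc k" using Pt_peak by blast
  then show "\<exists>n\<ge>N. \<bar>Pt (k,m) n - 0\<bar> \<ge> (1/2)^Suc k" using \<open>N \<le> n\<close> by (intro exI[of _ n]) simp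
qed simp

lemma sep_lt: assumes "m < m'" shows "\<exists>c>0. \<forall>N. \<exists>n\<ge>N. \<bar>Pt (k,m) n - Pt (k',m') n\<bar> \<ge> c"
proof (intro exI[of _ "(1/2)^Suc k'"] conjI allI)
  fix N
  obtain t n where tn: "int n = 2*3^t - m'" "N \<le> n" "\<bar>m\<bar> + \<bar>m'\<bar> \<le> 3^t" using exists_t[of m' N m] by blast
  have "Pt (k',m') n = (1/2)^Suc k'" using Pt_peak tn(1) by blast
  moreover have "m' - m \<le> 3^t" using tn(3) by arith
  then have "Pt (k,m) n = 0" using Pt_zero[OF tn(1) assms] by blast
  ultimately show "\<exists>n\<ge>N. \<bar>Pt (k,m) n - Pt (k',m') n\<bar> \<ge> (1/2)^Suc k'" using tn(2) by (intro exI[of _ n]) simp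
qed simp

lemma sep_eq: assumes "k \<noteq> k'" shows "\<exists>c>0. \<forall>N. \<exists>n\<ge>N. \<bar>Pt (k,m) n - Pt (k',m) n\<bar> \<ge> c"
proof (intro exI[of _ "\<bar>(1/2)^Suc k - (1/2)^Suc k'\<bar>"] conjI allI)
  fix N
  obtain t n where tn: "int n = 2*3^t - m" "N \<le> n" using exists_t[of m N m] by blast
  have "Pt (k,m) n = (1/2)^Suc k" "Pt (k',m) n = (1/2)^Suc k'" using Pt_peak[OF tn(1)] by blast+
  then show "\<exists>n\<ge>N. \<bar>Pt (k,m) n - Pt (k',m) n\<bar> \<ge> \<bar>(1/2::real)^Suc k - (1/2)^Suc k'\<bar>"
    using tn(2) by (intro exI[of _ n]) simp
next
  have "(2::real)^Suc k \<noteq> 2^Suc k'" using assms by simp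
  then have "(1/2::real)^Suc k \<noteq> (1/2)^Suc k'" unfolding power_one_over by (simp add: divide_eq_eq)
  then show "\<bar>(1/2::real)^Suc k - (1/2)^Suc k'\<bar> > 0" by simp
qed

lemma sep_Pt: assumes "p \<noteq> p'" shows "\<exists>c>0. \<forall>N. \<exists>n\<ge>N. \<bar>Pt p n - Pt p' n\<bar> \<ge> c"
proof -
  obtain k m k' m' where p: "p = (k,m)" "p' = (k',m')" by (cases p, cases p') auto
  consider "m < m'" | "m' < m" | "m = m'" "k \<noteq> k'" using assms p by fastforce
  then show ?thesis
  proof cases
    case 1 then show ?thesis using sep_lt p by blast
  next
    case 2
    then obtain c where "c > 0" "\<forall>N. \<exists>n\<ge>N. \<bar>Pt (k',m') n - Pt (k,m) n\<bar> \<ge> c" using sep_lt by blast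
    then show ?thesis using p by (metis abs_minus_commute)
  next
    case 3 then show ?thesis using sep_eq p by blast
  qed
qed

lemma sep: assumes "x \<in> XX" "y \<in> XX" "x \<noteq> y"
  shows "\<exists>c>0. \<forall>N. \<exists>n\<ge>N. \<bar>EE x n - EE y n\<bar> \<ge> c"
proof -
  consider "x = 0" "\<exists>k m. y = code (k,m)" | "y = 0" "\<exists>k m. x = code (k,m)"
    | "\<exists>k m. x = code (k,m)" "\<exists>k m. y = code (k,m)"
    using XX_cases[OF assms(1)] XX_cases[OF assms(2)] assms(3) by blast
  then show ?thesis
  proof cases
    case 1
    then obtain k m where "y = code (k,m)" by blast
    then show ?thesis using 1 sep_0[of k m] by (simp add: abs_minus_commute)
  next
    case 2
    then obtain k m where "x = code (k,m)" by blast
    then show ?thesis using 2 sep_0[of k m] by simp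
  next
    case 3
    then obtain p p' where "x = code p" "y = code p'" by blast
    then have "p \<noteq> p'" using assms(3) by blast
    then show ?thesis using sep_Pt \<open>x = code p\<close> \<open>y = code p'\<close> by simp
  qed
qed

lemma EE_inj: "x \<in> XX \<Longrightarrow> y \<in> XX \<Longrightarrow> EE x = EE y \<Longrightarrow> x = y"
  using sep by fastforce

lemma Metric_XX: "Metric_space XX dd"
  unfolding Metric_space_def dd_def
  by (auto simp: dist_commute dist_triangle EE_inj)



lemma EE_pow: "EE x i = 0 \<or> (\<exists>a. EE x i = (1/2)^a)"
proof (cases "x = 0")
  case False
  have "FF (snd (dec x) + int i) = 0 \<or> (\<exists>k. FF (snd (dec x) + int i) = (1/2)^k)" by (rule FF_pow)
  then show ?thesis
  proof
    assume "\<exists>k. FF (snd (dec x) + int i) = (1/2)^k"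
    then obtain k where "FF (snd (dec x) + int i) = (1/2)^k" by blast
    then have "EE x i = (1/2)^(fst (dec x) + k)" using False by (simp add: EE_def Pt_def power_add)
    then show ?thesis by blast
  qed (simp add: EE_def Pt_def False)
qed simp

lemma pow_close:
  fixes v :: real
  assumes "3 * v / 4 < (1/2)^a" "(1/2)^a < 5 * v / 4" "3 * v / 4 < (1/2)^b" "(1/2)^b < 5 * v / 4"
  shows "a = b"
proof (rule ccontr)
  assume "a \<noteq> b"
  have key: "\<And>a b. a < b \<Longrightarrow> 3 * v / 4 < (1/2::real)^a \<Longrightarrow> (1/2)^a < 5 * v / 4 \<Longrightarrow> 3 * v / 4 < (1/2)^b \<Longrightarrow> (1/2)^b < 5 * v / 4 \<Longrightarrow> False"
  proof -
    fix a b :: nat assume h: "a < b" "3 * v / 4 < (1/2::real)^a" "(1/2)^a < 5 * v / 4" "3 * v / 4 < (1/2)^b" "(1/2)^b < 5 * v / 4"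
    have "(1/2::real)^b \<le> (1/2)^(Suc a)" using h(1) by (intro power_decreasing) auto
    then have "(1/2::real)^b \<le> (1/2)^a / 2" by simp
    then show False using h by linarith
  qed
  show False
  proof (cases "a < b")
    case True then show ?thesis using key assms by blast
  next
    case False then have "b < a" using \<open>a \<noteq> b\<close> by simp
    then show ?thesis using key assms by blast
  qed
qed

lemma discrete_lim:
  fixes w :: "nat \<Rightarrow> real"
  assumes lim: "w \<longlonglongrightarrow> v" and nz: "v \<noteq> 0" and pw: "\<forall>j. w j = 0 \<or> (\<exists>a. w j = (1/2)^a)"
  shows "\<exists>a. v = (1/2)^a \<and> eventually (\<lambda>j. w j = v) sequentially"
proof -
  have wnn: "\<forall>j. w j \<ge> 0" using pw by (metis order_refl zero_le_divide_1_iff zero_le_numeral zero_le_power)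
  have "v \<ge> 0" using LIMSEQ_le_const[OF lim] wnn by blast
  then have vp: "v > 0" using nz by simp
  obtain N where N: "\<forall>j\<ge>N. dist (w j) v < v/4" using metric_LIMSEQ_D[OF lim] vp by (metis zero_less_divide_iff zero_less_numeral)
  have close: "3 * v / 4 < w j \<and> w j < 5 * v / 4" if "j \<ge> N" for j
  proof -
    have "\<bar>w j - v\<bar> < v/4" using N that by (simp add: dist_real_def)
    then show ?thesis unfolding abs_less_iff by linarith
  qed
  have powj: "\<exists>a. w j = (1/2)^a" if "j \<ge> N" for j
  proof -
    have "w j \<noteq> 0" using close[OF that] vp by linarith
    then show ?thesis using pw by blast
  qed
  obtain aN where aN: "w N = (1/2)^aN" using powj by blast
  have eq: "w j = w N" if jN: "j \<ge> N" for j
  proof -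
    obtain aj where aj: "w j = (1/2)^aj" using powj[OF jN] by blast
    have "aj = aN" using pow_close[of v aj aN] close[OF jN] close[of N] aj aN by simp
    then show ?thesis using aj aN by simp
  qed
  have ev: "eventually (\<lambda>j. w j = w N) sequentially" using eq eventually_sequentially by blast
  have "w \<longlonglongrightarrow> w N" using tendsto_eventually[OF ev] .
  then have "v = w N" using LIMSEQ_unique lim by blast
  then show ?thesis using ev aN by auto
qed

lemma CL:
  assumes xs: "\<forall>j. xs j \<in> XX" and lim: "\<forall>i. (\<lambda>j. EE (xs j) i) \<longlonglongrightarrow> y i"
  shows "\<exists>x\<in>XX. EE x = y"
proof (cases "\<forall>i. y i = 0")
  case True
  then have "EE 0 = y" by auto
  then show ?thesis unfolding XX_def by blast
next
  case False
  then obtain i0 where i0: "y i0 \<noteq> 0" by blast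
  obtain a where va: "y i0 = (1/2)^a" and ev0: "eventually (\<lambda>j. EE (xs j) i0 = y i0) sequentially"
    using discrete_lim[OF lim[rule_format, of i0] i0] EE_pow by blast
  define v where "v = y i0"
  have vp: "v > 0" unfolding v_def va by simp
  define kk where "kk j = fst (dec (xs j))" for j
  define mm where "mm j = snd (dec (xs j))" for j
  define \<sigma> where "\<sigma> j = mm j + int i0" for j
  have nz: "eventually (\<lambda>j. xs j \<noteq> 0) sequentially"
    using ev0 by (rule eventually_mono) (use i0 in auto)
  have EEf: "EE (xs j) i = (1/2)^(kk j) * FF (mm j + int i)" if "xs j \<noteq> 0" for j i
    using that by (simp add: EE_def Pt_def kk_def mm_def)
  have ev1: "eventually (\<lambda>j. (1/2)^(kk j) * FF (\<sigma> j) = v) sequentially"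
    using eventually_conj[OF ev0 nz]
  proof (rule eventually_mono)
    fix j assume h: "EE (xs j) i0 = y i0 \<and> xs j \<noteq> 0"
    then have "EE (xs j) i0 = (1/2)^(kk j) * FF (mm j + int i0)" using EEf by blast
    then show "(1/2)^(kk j) * FF (\<sigma> j) = v" using h unfolding \<sigma>_def v_def by simp
  qed
  have ev2: "eventually (\<lambda>j. FF (\<sigma> j) \<ge> (1/2)^a) sequentially"
    using ev1
  proof (rule eventually_mono)
    fix j assume h: "(1/2)^(kk j) * FF (\<sigma> j) = v"
    have "(1/2::real)^(kk j) \<le> 1" by (simp add: power_le_one)
    then have "(1/2)^(kk j) * FF (\<sigma> j) \<le> 1 * FF (\<sigma> j)" using FF_nonneg by (intro mult_right_mono) auto
    then show "FF (\<sigma> j) \<ge> (1/2)^a" using h va v_def by simp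
  qed
  obtain r L where r: "strict_mono r" "FF L > 0" "eventually (\<lambda>j. FF (\<sigma> (r j)) \<le> FF L) sequentially"
    "\<forall>d. eventually (\<lambda>j. FF (\<sigma> (r j) + d) / FF (\<sigma> (r j)) = FF (L + d) / FF L) sequentially"
    using S_lemma ev2 by blast
  have yform: "y i = v * (FF (L + (int i - int i0)) / FF L)" for i
  proof -
    have "eventually (\<lambda>j. EE (xs (r j)) i = v * (FF (L + (int i - int i0)) / FF L)) sequentially"
      using eventually_conj[OF eventually_conj[OF ev_subseq[OF r(1) ev1] ev_subseq[OF r(1) nz]] r(4)[rule_format, of "int i - int i0"]]
    proof (rule eventually_mono)
      fix j
      assume h: "((1/2)^(kk (r j)) * FF (\<sigma> (r j)) = v \<and> xs (r j) \<noteq> 0) \<and>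
        FF (\<sigma> (r j) + (int i - int i0)) / FF (\<sigma> (r j)) = FF (L + (int i - int i0)) / FF L"
      have Fp: "FF (\<sigma> (r j)) \<noteq> 0" using h vp by auto
      have "EE (xs (r j)) i = (1/2)^(kk (r j)) * FF (\<sigma> (r j) + (int i - int i0))"
        using h EEf unfolding \<sigma>_def by simp
      also have "\<dots> = ((1/2)^(kk (r j)) * FF (\<sigma> (r j))) * (FF (\<sigma> (r j) + (int i - int i0)) / FF (\<sigma> (r j)))"
        using Fp by simp
      also have "\<dots> = v * (FF (L + (int i - int i0)) / FF L)" using h by simp
      finally show "EE (xs (r j)) i = v * (FF (L + (int i - int i0)) / FF L)" .
    qed
    then have l1: "(\<lambda>j. EE (xs (r j)) i) \<longlonglongrightarrow> v * (FF (L + (int i - int i0)) / FF L)"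
      by (rule tendsto_eventually)
    have l2: "(\<lambda>j. EE (xs (r j)) i) \<longlonglongrightarrow> y i"
      using LIMSEQ_subseq_LIMSEQ[OF lim[rule_format, of i] r(1)] by (simp add: o_def)
    show ?thesis using LIMSEQ_unique[OF l2 l1] .
  qed
  obtain b where b: "FF L = (1/2)^b" using FF_pow[of L] r(2) by auto
  have "v \<le> FF L"
  proof -
    obtain j where "FF (\<sigma> (r j)) \<le> FF L" "(1/2)^(kk (r j)) * FF (\<sigma> (r j)) = v"
      using eventually_happens'[OF _ eventually_conj[OF r(3) ev_subseq[OF r(1) ev1]]] by auto
    moreover have "(1/2::real)^(kk (r j)) \<le> 1" by (simp add: power_le_one)
    ultimately show ?thesis using FF_nonneg[of "\<sigma> (r j)"]
      by (metis mult_left_le mult.commute order_trans)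
  qed
  then have "b \<le> a" using b va v_def by simp
  then have vb: "v / FF L = (1/2)^(a - b)" using b va v_def by (simp add: power_diff)
  define x where "x = code (a - b, L - int i0)"
  have "EE x = y"
  proof
    fix i
    have "y i = (v / FF L) * FF (L + (int i - int i0))" using yform[of i] by simp
    also have "\<dots> = EE x i" unfolding x_def vb by (simp add: Pt_def algebra_simps)
    finally show "EE x i = y i" by simp
  qed
  moreover have "x \<in> XX" unfolding x_def XX_def by simp
  ultimately show ?thesis by blast
qed



lemma compact_cube: "compact {f::nat\<Rightarrow>real. \<forall>i. f i \<in> {0..1}}"
proof -
  have "compactin (product_topology (\<lambda>_. euclidean) UNIV) (PiE UNIV (\<lambda>_::nat. {0..1::real}))"
    by (simp add: compactin_PiE)
  then have "compactin euclidean (PiE UNIV (\<lambda>_::nat. {0..1::real}))"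
    by (simp add: euclidean_product_topology)
  moreover have "PiE UNIV (\<lambda>_::nat. {0..1::real}) = {f. \<forall>i. f i \<in> {0..1}}"
    by (auto simp: PiE_iff)
  ultimately show ?thesis by simp
qed

lemma coord_tendsto:
  fixes g :: "nat \<Rightarrow> nat \<Rightarrow> real"
  assumes "g \<longlonglongrightarrow> l" shows "(\<lambda>j. g j i) \<longlonglongrightarrow> l i"
proof -
  have "continuous_on UNIV (\<lambda>x::nat\<Rightarrow>real. x i)" by simp
  then have "isCont (\<lambda>x::nat\<Rightarrow>real. x i) l"
    by (metis UNIV_I continuous_on_eq_continuous_at open_UNIV)
  then show ?thesis using isCont_tendsto_compose assms by blast
qed

lemma compact_XX: "compact_space (Metric_space.mtopology XX dd)"
proof -
  interpret M: Metric_space XX dd by (rule Metric_XX)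
  show ?thesis unfolding M.compact_space_sequentially
  proof (intro allI impI)
    fix \<sigma> :: "nat \<Rightarrow> real" assume rg: "range \<sigma> \<subseteq> XX"
    define g where "g j = EE (\<sigma> j)" for j
    have "\<forall>j. g j \<in> {f::nat\<Rightarrow>real. \<forall>i. f i \<in> {0..1}}" unfolding g_def using EE_range by auto
    then obtain l r where l: "l \<in> {f::nat\<Rightarrow>real. \<forall>i. f i \<in> {0..1}}" "strict_mono (r::nat\<Rightarrow>nat)" "(g \<circ> r) \<longlonglongrightarrow> l"
      using compact_imp_seq_compact[OF compact_cube] unfolding seq_compact_def by metis
    have pw: "\<forall>i. (\<lambda>j. EE (\<sigma> (r j)) i) \<longlonglongrightarrow> l i"
      using coord_tendsto[OF l(3)] unfolding g_def o_def by blast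
    obtain x where x: "x \<in> XX" "EE x = l" using CL[of "\<lambda>j. \<sigma> (r j)" l] rg pw by auto
    have "limitin M.mtopology (\<sigma> \<circ> r) x sequentially"
      unfolding M.limit_metric_sequentially
    proof (intro conjI allI impI)
      show "x \<in> XX" by (rule x(1))
      fix \<epsilon> :: real assume "\<epsilon> > 0"
      then obtain N where "\<forall>n\<ge>N. dist ((g \<circ> r) n) l < \<epsilon>" using metric_LIMSEQ_D[OF l(3)] by blast
      then have "\<forall>n\<ge>N. (\<sigma> \<circ> r) n \<in> XX \<and> dd ((\<sigma> \<circ> r) n) x < \<epsilon>"
        using rg x by (auto simp: dd_def g_def)
      then show "\<exists>N. \<forall>n\<ge>N. (\<sigma> \<circ> r) n \<in> XX \<and> dd ((\<sigma> \<circ> r) n) x < \<epsilon>" by blast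
    qed
    then show "\<exists>l r. l \<in> XX \<and> strict_mono r \<and> limitin M.mtopology (\<sigma> \<circ> r) l sequentially"
      using x(1) l(2) by blast
  qed
qed

lemma cont_TT: "continuous_map (Metric_space.mtopology XX dd) (Metric_space.mtopology XX dd) TT"
proof -
  interpret M: Metric_space XX dd by (rule Metric_XX)
  define Sh where "Sh = (\<lambda>u::nat\<Rightarrow>real. \<lambda>i. u (Suc i))"
  have "continuous_on UNIV Sh" unfolding Sh_def
    by (intro continuous_on_coordinatewise_then_product) simp
  then have cS: "\<forall>x. \<forall>\<epsilon>>0. \<exists>\<delta>>0. \<forall>x'. dist x' x < \<delta> \<longrightarrow> dist (Sh x') (Sh x) < \<epsilon>"
    unfolding continuous_on_iff by blast
  show ?thesis unfolding M.metric_continuous_map[OF Metric_XX]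
  proof (intro conjI ballI allI impI)
    show "TT ` XX \<subseteq> XX" using TT_XX by blast
    fix a \<epsilon> assume a: "a \<in> XX" and e: "(\<epsilon>::real) > 0"
    obtain \<delta> where d: "\<delta> > 0" "\<forall>x'. dist x' (EE a) < \<delta> \<longrightarrow> dist (Sh x') (Sh (EE a)) < \<epsilon>"
      using cS e by blast
    show "\<exists>\<delta>>0. \<forall>x. x \<in> XX \<and> dd a x < \<delta> \<longrightarrow> dd (TT a) (TT x) < \<epsilon>"
    proof (intro exI[of _ \<delta>] conjI allI impI)
      show "\<delta> > 0" by (rule d(1))
      fix x assume x: "x \<in> XX \<and> dd a x < \<delta>"
      then have "dist (EE x) (EE a) < \<delta>" by (simp add: dd_def dist_commute)
      then have "dist (Sh (EE x)) (Sh (EE a)) < \<epsilon>" using d(2) by blast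
      then show "dd (TT a) (TT x) < \<epsilon>" using EE_TT a x by (simp add: dd_def Sh_def dist_commute)
    qed
  qed
qed

lemma dist_coord:
  fixes u v :: "nat \<Rightarrow> real"
  shows "(1/2)^(to_nat i) * min (dist (u i) (v i)) 1 \<le> dist u v"
proof -
  define h where "h n = (1/2)^n * min (dist (u (from_nat n)) (v (from_nat n))) 1" for n
  have sm: "summable h" unfolding h_def
    by (rule summable_comparison_test'[of "\<lambda>n. (1/2)^n"]) (auto simp add: summable_geometric_iff)
  have "sum h {to_nat i} \<le> suminf h"
    by (rule sum_le_suminf[OF sm]) (auto simp: h_def)
  then show ?thesis unfolding dist_fun_def h_def by simp
qed

lemma not_asym: assumes "x \<in> XX" "y \<in> XX" "x \<noteq> y" shows "\<not> asymptotic dd TT x y"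
proof
  assume as: "asymptotic dd TT x y"
  obtain c where c: "c > 0" "\<forall>N. \<exists>n\<ge>N. \<bar>EE x n - EE y n\<bar> \<ge> c" using sep[OF assms] by blast
  define c0 where "c0 = (1/2::real)^(to_nat (0::nat))"
  have c0: "c0 > 0" unfolding c0_def by simp
  have "c0 * min c 1 > 0" using c0 c(1) by simp
  then obtain N where N: "\<forall>n\<ge>N. dist (dd ((TT^^n) x) ((TT^^n) y)) 0 < c0 * min c 1"
    using metric_LIMSEQ_D[OF as[unfolded asymptotic_def]] by blast
  obtain n where n: "n \<ge> N" "\<bar>EE x n - EE y n\<bar> \<ge> c" using c(2) by blast
  have "dd ((TT^^n) x) ((TT^^n) y) = dist (\<lambda>i. EE x (n+i)) (\<lambda>i. EE y (n+i))"
    using iter_XX assms by (simp add: dd_def)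
  also have "\<dots> \<ge> c0 * min (dist (EE x (n+0)) (EE y (n+0))) 1"
    unfolding c0_def using dist_coord[of 0 "\<lambda>i. EE x (n+i)" "\<lambda>i. EE y (n+i)"] by simp
  finally have "dd ((TT^^n) x) ((TT^^n) y) \<ge> c0 * min \<bar>EE x n - EE y n\<bar> 1" by (simp add: dist_real_def)
  moreover have "c0 * min \<bar>EE x n - EE y n\<bar> 1 \<ge> c0 * min c 1"
    using n(2) c0 by (intro mult_left_mono) auto
  moreover have "dd ((TT^^n) x) ((TT^^n) y) \<ge> 0" by (simp add: dd_def)
  ultimately show False using N n(1) by force
qed



lemma fin_int: "finite {n::int. a \<le> n \<and> n < b \<and> P n}"
  by (rule finite_subset[of _ "{a..<b}"]) auto

lemma B0: "card {r::nat. r < 3^s \<and> ff r \<noteq> 0} \<le> 2^s"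
proof (induction s)
  case 0
  have "{r::nat. r < 3^0 \<and> ff r \<noteq> 0} \<subseteq> {0}" by auto
  then have "card {r::nat. r < 3^0 \<and> ff r \<noteq> 0} \<le> card {0::nat}" by (rule card_mono[rotated]) simp
  then show ?case by simp
next
  case (Suc s)
  define A where "A s = {r::nat. r < 3^s \<and> ff r \<noteq> 0}" for s
  have finA: "finite (A s)" unfolding A_def by (rule finite_subset[of _ "{..<3^s}"]) auto
  have sub: "A (Suc s) \<subseteq> (\<lambda>(a,r). 3^s*a + r) ` ({0,2} \<times> A s)"
  proof
    fix r assume "r \<in> A (Suc s)"
    then have r: "r < 3 * 3^s" "ff r \<noteq> 0" unfolding A_def by auto
    define a where "a = r div 3^s"
    define r0 where "r0 = r mod 3^s"
    have req: "r = 3^s * a + r0" unfolding a_def r0_def by simp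
    have r0: "r0 < 3^s" unfolding r0_def by simp
    have "a < 3" unfolding a_def using r(1) by (simp add: less_mult_imp_div_less)
    have ffr: "ff r = ff a * ff r0" using req ffM[OF r0, of a] by simp
    then have "ff a \<noteq> 0" "ff r0 \<noteq> 0" using r(2) by auto
    then have "a \<noteq> 1" by auto
    then have "a \<in> {0,2}" using \<open>a < 3\<close> by auto
    moreover have "r0 \<in> A s" unfolding A_def using r0 \<open>ff r0 \<noteq> 0\<close> by simp
    ultimately show "r \<in> (\<lambda>(a,r). 3^s*a + r) ` ({0,2} \<times> A s)" using req by force
  qed
  have "card (A (Suc s)) \<le> card ((\<lambda>(a,r). 3^s*a + r) ` ({0::nat,2} \<times> A s))"
    by (rule card_mono) (use finA sub in auto)
  also have "\<dots> \<le> card ({0::nat,2} \<times> A s)" by (rule card_image_le) (use finA in auto)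
  also have "\<dots> = 2 * card (A s)" by (simp add: card_cartesian_product)
  also have "\<dots> \<le> 2 * 2^s" using Suc.IH unfolding A_def by simp
  finally show ?case unfolding A_def by simp
qed

lemma B1: "card {n::int. 3^s*q \<le> n \<and> n < 3^s*q + 3^s \<and> FF n \<noteq> 0} \<le> 2^s"
proof -
  have sub: "{n::int. 3^s*q \<le> n \<and> n < 3^s*q + 3^s \<and> FF n \<noteq> 0} \<subseteq> (\<lambda>r. 3^s*q + int r) ` {r. r < 3^s \<and> ff r \<noteq> 0}"
  proof
    fix n assume "n \<in> {n::int. 3^s*q \<le> n \<and> n < 3^s*q + 3^s \<and> FF n \<noteq> 0}"
    then have n: "3^s*q \<le> n" "n < 3^s*q + 3^s" "FF n \<noteq> 0" by auto
    define r where "r = nat (n - 3^s*q)"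
    have rn: "n = 3^s*q + int r" unfolding r_def using n by simp
    have "int r < 3^s" using n rn by simp
    then have "int r < int (3^s)" by simp
    then have rl: "r < 3^s" by (simp only: of_nat_less_iff)
    have "FF n = FF q * FF (int r)" using rn FM[of "int r" s q] \<open>int r < 3^s\<close> by simp
    then have "ff r \<noteq> 0" using n(3) by simp
    then show "n \<in> (\<lambda>r. 3^s*q + int r) ` {r. r < 3^s \<and> ff r \<noteq> 0}" using rn rl by blast
  qed
  have fin: "finite {r::nat. r < 3^s \<and> ff r \<noteq> 0}" by (rule finite_subset[of _ "{..<3^s}"]) auto
  have "card {n::int. 3^s*q \<le> n \<and> n < 3^s*q + 3^s \<and> FF n \<noteq> 0} \<le> card ((\<lambda>r. 3^s*q + int r) ` {r. r < 3^s \<and> ff r \<noteq> 0})"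
    by (rule card_mono) (use fin sub in auto)
  also have "\<dots> \<le> card {r. r < 3^s \<and> ff r \<noteq> 0}" by (rule card_image_le[OF fin])
  also have "\<dots> \<le> 2^s" by (rule B0)
  finally show ?thesis .
qed

lemma B2: "card {n::int. c \<le> n \<and> n < c + 3^s \<and> FF n \<noteq> 0} \<le> 2 * 2^s"
proof -
  define q where "q = c div 3^s"
  have m1: "c mod 3^s \<ge> 0" "c mod 3^s < 3^s" by simp_all
  have m2: "3^s * q + c mod 3^s = c" unfolding q_def by (rule mult_div_mod_eq)
  have q1: "3^s * q \<le> c" using m1 m2 by linarith
  have q2: "c < 3^s * q + 3^s" using m1 m2 by linarith
  have sub: "{n::int. c \<le> n \<and> n < c + 3^s \<and> FF n \<noteq> 0} \<subseteq>
    {n::int. 3^s*q \<le> n \<and> n < 3^s*q + 3^s \<and> FF n \<noteq> 0} \<union> {n::int. 3^s*(q+1) \<le> n \<and> n < 3^s*(q+1) + 3^s \<and> FF n \<noteq> 0}"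
  proof
    fix n assume "n \<in> {n::int. c \<le> n \<and> n < c + 3^s \<and> FF n \<noteq> 0}"
    then have n: "c \<le> n" "n < c + 3^s" "FF n \<noteq> 0" by auto
    have e: "3^s*(q+1) = 3^s*q + 3^s" by (simp add: distrib_left)
    show "n \<in> {n::int. 3^s*q \<le> n \<and> n < 3^s*q + 3^s \<and> FF n \<noteq> 0} \<union> {n::int. 3^s*(q+1) \<le> n \<and> n < 3^s*(q+1) + 3^s \<and> FF n \<noteq> 0}"
    proof (cases "n < 3^s*q + 3^s")
      case True then show ?thesis using n q1 by simp
    next
      case False then show ?thesis using n q2 unfolding e by simp
    qed
  qed
  have "card {n::int. c \<le> n \<and> n < c + 3^s \<and> FF n \<noteq> 0} \<le>
    card ({n::int. 3^s*q \<le> n \<and> n < 3^s*q + 3^s \<and> FF n \<noteq> 0} \<union> {n::int. 3^s*(q+1) \<le> n \<and> n < 3^s*(q+1) + 3^s \<and> FF n \<noteq> 0})"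
    by (rule card_mono[OF _ sub]) (simp add: fin_int)
  also have "\<dots> \<le> card {n::int. 3^s*q \<le> n \<and> n < 3^s*q + 3^s \<and> FF n \<noteq> 0} + card {n::int. 3^s*(q+1) \<le> n \<and> n < 3^s*(q+1) + 3^s \<and> FF n \<noteq> 0}"
    by (rule card_Un_le)
  also have "\<dots> \<le> 2^s + 2^s" using B1[of s q] B1[of s "q+1"] by linarith
  finally show ?thesis by simp
qed

lemma B3: "card {n::int. c \<le> n \<and> n < c + int j * 3^s \<and> FF n \<noteq> 0} \<le> 2 * j * 2^s"
proof (induction j)
  case 0
  show ?case by (auto simp: card_eq_0_iff)
next
  case (Suc j)
  have sub: "{n::int. c \<le> n \<and> n < c + int (Suc j) * 3^s \<and> FF n \<noteq> 0} \<subseteq>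
    {n::int. c \<le> n \<and> n < c + int j * 3^s \<and> FF n \<noteq> 0} \<union> {n::int. c + int j * 3^s \<le> n \<and> n < (c + int j * 3^s) + 3^s \<and> FF n \<noteq> 0}"
  proof -
    have e: "c + int (Suc j) * 3^s = (c + int j * 3^s) + 3^s" by (simp add: distrib_right)
    show ?thesis unfolding e by auto
  qed
  have "card {n::int. c \<le> n \<and> n < c + int (Suc j) * 3^s \<and> FF n \<noteq> 0} \<le>
    card ({n::int. c \<le> n \<and> n < c + int j * 3^s \<and> FF n \<noteq> 0} \<union> {n::int. c + int j * 3^s \<le> n \<and> n < (c + int j * 3^s) + 3^s \<and> FF n \<noteq> 0})"
    by (rule card_mono[OF _ sub]) (simp add: fin_int)
  also have "\<dots> \<le> card {n::int. c \<le> n \<and> n < c + int j * 3^s \<and> FF n \<noteq> 0} + card {n::int. c + int j * 3^s \<le> n \<and> n < (c + int j * 3^s) + 3^s \<and> FF n \<noteq> 0}"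
    by (rule card_Un_le)
  also have "\<dots> \<le> 2 * j * 2^s + 2 * 2^s" using Suc.IH B2[of "c + int j * 3^s" s] by linarith
  finally show ?case by simp
qed

lemma B4: "card {n::int. c \<le> n \<and> n < c + int L \<and> FF n \<noteq> 0} \<le> 2 * (L div 3^s + 1) * 2^s"
proof -
  define j where "j = L div 3^s + 1"
  have m1: "L mod 3^s < 3^s" by simp
  have m2: "L div 3^s * 3^s + L mod 3^s = L" by (rule div_mult_mod_eq)
  have m3: "j * 3^s = L div 3^s * 3^s + 3^s" unfolding j_def by (simp add: algebra_simps)
  have "L < j * 3^s" using m1 m2 m3 by linarith
  then have "int L < int (j * 3^s)" by (simp only: of_nat_less_iff)
  then have "int L < int j * 3^s" by simp
  then have "{n::int. c \<le> n \<and> n < c + int L \<and> FF n \<noteq> 0} \<subseteq> {n::int. c \<le> n \<and> n < c + int j * 3^s \<and> FF n \<noteq> 0}"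
    by auto
  then have "card {n::int. c \<le> n \<and> n < c + int L \<and> FF n \<noteq> 0} \<le> card {n::int. c \<le> n \<and> n < c + int j * 3^s \<and> FF n \<noteq> 0}"
    by (rule card_mono[rotated]) (simp add: fin_int)
  also have "\<dots> \<le> 2 * j * 2^s" by (rule B3)
  finally show ?thesis unfolding j_def .
qed

lemma cnt_EE: assumes "x \<in> XX"
  shows "card {n \<in> {a..b}. EE x (n + i) \<noteq> 0} \<le> 2 * ((Suc b - a) div 3^s + 1) * 2^s"
proof (cases "x = 0")
  case True then show ?thesis by simp
next
  case False
  then have "\<exists>k m. x = code (k,m)" using XX_cases[OF assms] by simp
  then obtain k m where x: "x = code (k,m)" by blast
  define c where "c = m + int a + int i"
  define f where "f n = m + int n + int i" for n
  have inj: "inj_on f {n \<in> {a..b}. EE x (n + i) \<noteq> 0}" unfolding f_def inj_on_def by simp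
  have sub: "f ` {n \<in> {a..b}. EE x (n + i) \<noteq> 0} \<subseteq> {z::int. c \<le> z \<and> z < c + int (Suc b - a) \<and> FF z \<noteq> 0}"
  proof
    fix z assume "z \<in> f ` {n \<in> {a..b}. EE x (n + i) \<noteq> 0}"
    then obtain n where n: "n \<in> {a..b}" "EE x (n+i) \<noteq> 0" "z = f n" by blast
    have "FF (m + int (n+i)) \<noteq> 0" using n(2) x by (simp add: Pt_def)
    then show "z \<in> {z::int. c \<le> z \<and> z < c + int (Suc b - a) \<and> FF z \<noteq> 0}"
    proof -
      have "a \<le> n" "n \<le> b" using n(1) by auto
      then have "int a \<le> int n" "int n < int (Suc b - a) + int a" by linarith+
      moreover have "z = m + int (n+i)" using n(3) unfolding f_def by simp
      ultimately show ?thesis unfolding c_def using \<open>FF (m + int (n+i)) \<noteq> 0\<close> by simp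
    qed
  qed
  have "card {n \<in> {a..b}. EE x (n + i) \<noteq> 0} \<le> card {z::int. c \<le> z \<and> z < c + int (Suc b - a) \<and> FF z \<noteq> 0}"
    by (rule card_inj_on_le[OF inj sub fin_int])
  also have "\<dots> \<le> 2 * ((Suc b - a) div 3^s + 1) * 2^s" by (rule B4)
  finally show ?thesis .
qed



lemma good_step:
  assumes x: "x \<in> XX" and y: "y \<in> XX"
    and z: "\<forall>j\<le>N0. EE x (n + from_nat j) = 0 \<and> EE y (n + from_nat j) = 0"
  shows "dd ((TT^^n) x) ((TT^^n) y) \<le> (1/2)^N0"
proof -
  define u where "u = (\<lambda>i. EE x (n+i))"
  define v where "v = (\<lambda>i. EE y (n+i))"
  have "dd ((TT^^n) x) ((TT^^n) y) = dist u v" unfolding dd_def u_def v_def using iter_XX x y by simp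
  also have "\<dots> \<le> 2 * Max {dist (u (from_nat j)) (v (from_nat j)) |j. j \<le> N0} + (1/2)^N0"
    by (rule dist_fun_le_dist_first_terms)
  also have "{dist (u (from_nat j)) (v (from_nat j)) |j. j \<le> N0} = {0}"
  proof
    have h: "\<forall>j\<le>N0. dist (u (from_nat j)) (v (from_nat j)) = 0" using z unfolding u_def v_def by simp
    then show "{dist (u (from_nat j)) (v (from_nat j)) |j. j \<le> N0} \<subseteq> {0}" by auto
    have "0 \<in> {dist (u (from_nat j)) (v (from_nat j)) |j. j \<le> N0}"
      by (intro CollectI exI[of _ 0]) (use h in simp)
    then show "{0} \<subseteq> {dist (u (from_nat j)) (v (from_nat j)) |j. j \<le> N0}" by simp
  qed
  finally show ?thesis by simp
qed

lemma banach:
  assumes x: "x \<in> XX" and y: "y \<in> XX" and e: "e > 0"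
  shows "banach_density_one {n. dd ((TT^^n) x) ((TT^^n) y) < e}"
proof -
  define G where "G = {n. dd ((TT^^n) x) ((TT^^n) y) < e}"
  obtain N0 where N0: "(1/2::real)^N0 < e" using real_arch_pow_inv[of e "1/2"] e by auto
  define I where "I = (from_nat :: nat \<Rightarrow> nat) ` {..N0}"
  have finI: "finite I" unfolding I_def by simp
  have cardI: "card I \<le> Suc N0" unfolding I_def using card_image_le[of "{..N0}" "from_nat :: nat \<Rightarrow> nat"] by simp
  define Bad where "Bad = (\<Union>i\<in>I. {n. EE x (n+i) \<noteq> 0} \<union> {n. EE y (n+i) \<noteq> 0})"
  have good: "n \<in> G" if "n \<notin> Bad" for n
  proof -
    have "\<forall>j\<le>N0. EE x (n + from_nat j) = 0 \<and> EE y (n + from_nat j) = 0"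
      using that unfolding Bad_def I_def by auto
    then have "dd ((TT^^n) x) ((TT^^n) y) \<le> (1/2)^N0" using good_step x y by blast
    then show ?thesis unfolding G_def using N0 by simp
  qed
  define M where "M = Suc N0"
  show ?thesis unfolding banach_density_one_def G_def[symmetric]
  proof (intro allI impI)
    fix l :: real assume l: "l < 1"
    define \<epsilon> where "\<epsilon> = 1 - l"
    have ep: "\<epsilon> > 0" unfolding \<epsilon>_def using l by simp
    have Mp: "real M > 0" unfolding M_def by simp
    obtain s where s: "(2/3::real)^s < \<epsilon> / (8 * real M)"
      using real_arch_pow_inv[of "\<epsilon> / (8 * real M)" "2/3"] ep Mp by auto
    define Nb where "Nb = max 1 (nat \<lceil>8 * real M * 2^s / \<epsilon>\<rceil>)"
    have Nb1: "Nb \<ge> 1" unfolding Nb_def by simp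
    have NbR: "8 * real M * 2^s / \<epsilon> \<le> real Nb" unfolding Nb_def
      by (metis (no_types, lifting) le_nat_iff max.cobounded2 of_nat_le_iff of_nat_nat real_nat_ceiling_ge order_trans)
    show "\<exists>N\<ge>1. \<forall>a b. a \<le> b \<longrightarrow> N \<le> card {a..b} \<longrightarrow> l * real (card {a..b}) \<le> real (card (G \<inter> {a..b}))"
    proof (intro exI[of _ Nb] conjI allI impI)
      show "Nb \<ge> 1" by (rule Nb1)
      fix a b :: nat assume ab: "a \<le> b" and cN: "Nb \<le> card {a..b}"
      define L where "L = card {a..b}"
      have L: "L = Suc b - a" unfolding L_def by simp
      define C where "C = 2 * ((Suc b - a) div 3^s + 1) * 2^s"
      define Ax where "Ax i = {n \<in> {a..b}. EE x (n + i) \<noteq> 0}" for i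
      define Ay where "Ay i = {n \<in> {a..b}. EE y (n + i) \<noteq> 0}" for i
      have eqB: "{a..b} \<inter> Bad = (\<Union>i\<in>I. Ax i \<union> Ay i)" unfolding Bad_def Ax_def Ay_def by auto
      have "card ({a..b} \<inter> Bad) \<le> (\<Sum>i\<in>I. card (Ax i \<union> Ay i))"
        unfolding eqB by (rule card_UN_le[OF finI])
      also have "\<dots> \<le> (\<Sum>i\<in>I. 2 * C)"
      proof (rule sum_mono)
        fix i assume "i \<in> I"
        have "card (Ax i \<union> Ay i) \<le> card (Ax i) + card (Ay i)" by (rule card_Un_le)
        also have "\<dots> \<le> C + C" unfolding Ax_def Ay_def C_def using cnt_EE[OF x] cnt_EE[OF y] by (intro add_mono) auto
        finally show "card (Ax i \<union> Ay i) \<le> 2 * C" by simp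
      qed
      also have "\<dots> = card I * (2 * C)" by simp
      also have "\<dots> \<le> M * (2 * C)" unfolding M_def using cardI by (intro mult_right_mono) auto
      finally have cB: "card ({a..b} \<inter> Bad) \<le> M * (2 * C)" .
      have "{a..b} - Bad \<subseteq> G \<inter> {a..b}" using good by auto
      then have "card ({a..b} - Bad) \<le> card (G \<inter> {a..b})" by (rule card_mono[rotated]) simp
      moreover have "card ({a..b} - Bad) = card {a..b} - card ({a..b} \<inter> Bad)"
        by (rule card_Diff_subset_Int) simp
      moreover have "card ({a..b} \<inter> Bad) \<le> card {a..b}" by (rule card_mono) auto
      ultimately have cG: "real (card (G \<inter> {a..b})) \<ge> real L - real (card ({a..b} \<inter> Bad))"
        unfolding L_def by (metis of_nat_diff of_nat_le_iff)
      have "real ((Suc b - a) div 3^s) \<le> real L / 3^s"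
        unfolding L using of_nat_div_le_of_nat[of "Suc b - a" "3^s"] by simp
      then have "2 * (real ((Suc b - a) div 3^s) + 1) \<le> 2 * (real L / 3^s + 1)" by simp
      then have "2 * (real ((Suc b - a) div 3^s) + 1) * 2^s \<le> 2 * (real L / 3^s + 1) * 2^s"
        by (rule mult_right_mono) simp
      moreover have "real C = 2 * (real ((Suc b - a) div 3^s) + 1) * 2^s" unfolding C_def by (simp add: algebra_simps)
      ultimately have "real C \<le> 2 * (real L / 3^s + 1) * 2^s" by simp
      then have "2 * real C \<le> 2 * (2 * (real L / 3^s + 1) * 2^s)" by simp
      then have cc: "real M * (2 * real C) \<le> real M * (2 * (2 * (real L / 3^s + 1) * 2^s))"
        by (rule mult_left_mono) simp
      have "real (card ({a..b} \<inter> Bad)) \<le> real (M * (2 * C))" using cB by (simp only: of_nat_le_iff)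
      also have "\<dots> = real M * (2 * real C)" by simp
      also have "\<dots> \<le> real M * (2 * (2 * (real L / 3^s + 1) * 2^s))" by (rule cc)
      also have "\<dots> = 4 * real M * (2/3)^s * real L + 4 * real M * 2^s"
      proof -
        have "(2/3::real)^s = 2^s/3^s" by (rule power_divide)
        then show ?thesis by (simp add: field_simps)
      qed
      also have "\<dots> \<le> (\<epsilon>/2) * real L + (\<epsilon>/2) * real L"
      proof (rule add_mono)
        have "4 * real M * (2/3)^s \<le> \<epsilon>/2" using s Mp by (simp add: field_simps)
        then show "4 * real M * (2/3)^s * real L \<le> (\<epsilon>/2) * real L" by (rule mult_right_mono) simp
        have "real Nb \<le> real L" using cN unfolding L_def by simp
        then have "8 * real M * 2^s / \<epsilon> \<le> real L" using NbR by linarith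
        then show "4 * real M * 2^s \<le> (\<epsilon>/2) * real L" using ep by (simp add: field_simps)
      qed
      finally have "real (card ({a..b} \<inter> Bad)) \<le> \<epsilon> * real L" by simp
      then show "l * real (card {a..b}) \<le> real (card (G \<inter> {a..b}))"
        using cG unfolding \<epsilon>_def L_def by (simp add: algebra_simps)
    qed
  qed
qed


theorem mainTheorem2:
  shows "\<exists>(X::real set) d T. tds X d T \<and> (\<exists>x\<in>X. \<exists>y\<in>X. x \<noteq> y) \<and> banach_scrambled d T X"
proof -
  have two: "\<exists>x\<in>XX. \<exists>y\<in>XX. x \<noteq> y"
  proof -
    have "0 \<in> XX" "code (0,0) \<in> XX" unfolding XX_def by auto
    moreover have "(0::real) \<noteq> code (0,0)" using code_ne0[of "(0,0)"] by metis
    ultimately show ?thesis by blast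
  qed
  have "tds XX dd TT"
    unfolding tds_def using Metric_XX compact_XX cont_TT by (auto simp: XX_def)
  moreover have "banach_scrambled dd TT XX"
    unfolding banach_scrambled_def banach_proximal_def
    using two banach not_asym by blast
  ultimately show ?thesis using two by blast
qed

end
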